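(* If $y^{(i_1)}$ and $y^{(i_2)}$ are two points lying in the same lap $I_j$, $1\le j\le n$, then $U\,V_\beta\,e_{i_1}=U\,V_\beta\,e_{i_2}$, where $e_i$ denotes the $i$-th standard basis vector of $\mathbb{R}^q$ (the vector representing $y^{(i)}$).
   Context: Setting. $I\subset\mathbb{R}$ compact interval; $f_i(x)=\rho_ix+\varrho_i$ ($i=1,\dots,n$), $0<|\rho_i|<1$, IFS with open set condition; $I$ is the union of a nonempty open interval $I_h$ (hole) and $f_1(I),\dots,f_n(I)$, with pairwise disjoint interiors and $I_h$ disjoint from the $f_i(I)$; $F(x)=f_i^{-1}(x)$ on $f_i(I)$. The laps $I_1,\dots,I_n$ (left to right) and the hole have endpoints $a_1<\dots<a_{n+2}$, hole $(a_h,a_{h+1})$; interior endpoints are turning/discontinuity points. Assume the forward orbit of every one-sided endpoint $a_i^\pm$ is finite. Points $y^{(1)},\dots,y^{(q)}$: the one-sided endpoints $a_1^+,a_2^-,a_2^+,\dots,a_{n+2}^-$ (with $a_i^-,a_i^+$ consecutive) together with all other points of their forward orbits, ordered along $I$. $V_\beta=[v_{ij}]$ ($q\times q$, $\beta\in\mathbb{R}$): if $F(y^{(j)})=y^{(i)}$, $v_{ij}=\varepsilon(y^{(j)})|F'(y^{(j)})|^{-\beta}$ with $\varepsilon$ the sign of $F'$ at $y^{(j)}$ (column zero for limits from inside the hole); for every pair of consecutive entries that are the two one-sided versions of a turning/discontinuity point between $y^{(j)}$ and $y^{(i)}$: if $y^{(i)}>y^{(j)}$, pair $y^{(k)},y^{(k+1)}$,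 $j\le k<i$, set $v_{kj}=v_{ij}$, $v_{k+1,j}=-v_{ij}$; if $y^{(i)}<y^{(j)}$, pair $y^{(k-1)},y^{(k)}$, $i<k\le j$, set $v_{k-1,j}=-v_{ij}$, $v_{kj}=v_{ij}$; all other entries $0$. $U$ is the $n\times q$ matrix with entry $(j,i)$ equal to $1$ if $y^{(i)}$ lies in lap $I_j$ and $0$ otherwise. *)

theory Defs
  imports Complex_Main "HOL-Library.Product_Lexorder" "Jordan_Normal_Form.Matrix"
begin

text \<open>Parameters: n laps; endpoints a 1 < ... < a (n+2); the hole is (a h, a (h+1));
  the affine maps f i x = rho i * x + varrho i (i = 1..n), indexed so that f i maps I onto
  the i-th lap (laps numbered left to right).\<close>

definition Ival :: "nat \<Rightarrow> (nat \<Rightarrow> real) \<Rightarrow> real set" where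
  "Ival n a = {a 1 .. a (n + 2)}"

definition hole :: "(nat \<Rightarrow> real) \<Rightarrow> nat \<Rightarrow> real set" where
  "hole a h = {a h <..< a (Suc h)}"

definition lapidx :: "nat \<Rightarrow> nat \<Rightarrow> nat" where
  "lapidx h j = (if j < h then j else Suc j)"

definition lap :: "(nat \<Rightarrow> real) \<Rightarrow> nat \<Rightarrow> nat \<Rightarrow> real set" where
  "lap a h j = {a (lapidx h j) .. a (Suc (lapidx h j))}"

definition ifs_with_hole ::
  "nat \<Rightarrow> (nat \<Rightarrow> real) \<Rightarrow> nat \<Rightarrow> (nat \<Rightarrow> real) \<Rightarrow> (nat \<Rightarrow> real) \<Rightarrow> bool" where
  "ifs_with_hole n a h \<rho> \<sigma> \<longleftrightarrow>
     1 \<le> n \<and> (\<forall>i\<in>{1..n+1}. a i < a (Suc i)) \<and> 1 \<le> h \<and> h \<le> n + 1 \<and>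
     (\<forall>i\<in>{1..n}. 0 < \<bar>\<rho> i\<bar> \<and> \<bar>\<rho> i\<bar> < 1 \<and>
        (\<lambda>x. \<rho> i * x + \<sigma> i) ` Ival n a = lap a h i) \<and>
     Ival n a = hole a h \<union> (\<Union>i\<in>{1..n}. lap a h i)"

text \<open>A one-sided point is a pair (x, s): s = True means x^+ (limit from the right),
  s = False means x^- (limit from the left). The lexicographic order on real \<times> bool
  orders points along I with x^- immediately before x^+.\<close>

type_synonym spoint = "real \<times> bool"

definition in_lap :: "nat \<Rightarrow> (nat \<Rightarrow> real) \<Rightarrow> nat \<Rightarrow> nat \<Rightarrow> spoint \<Rightarrow> bool" where
  "in_lap n a h j y \<longleftrightarrow> 1 \<le> j \<and> j \<le> n \<and>
     (if snd y then a (lapidx h j) \<le> fst y \<and> fst y < a (Suc (lapidx h j))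
      else a (lapidx h j) < fst y \<and> fst y \<le> a (Suc (lapidx h j)))"

definition lap_of :: "nat \<Rightarrow> (nat \<Rightarrow> real) \<Rightarrow> nat \<Rightarrow> spoint \<Rightarrow> nat" where
  "lap_of n a h y = (THE j. in_lap n a h j y)"

text \<open>The map F applied to a one-sided point (one-sided limit); undefined (None) for
  points not in any lap, i.e. limits from inside the hole.\<close>
definition Fside ::
  "nat \<Rightarrow> (nat \<Rightarrow> real) \<Rightarrow> nat \<Rightarrow> (nat \<Rightarrow> real) \<Rightarrow> (nat \<Rightarrow> real) \<Rightarrow> spoint \<Rightarrow> spoint option" where
  "Fside n a h \<rho> \<sigma> y =
     (if \<exists>j. in_lap n a h j y then
        (let j = lap_of n a h y in
         Some ((fst y - \<sigma> j) / \<rho> j, if \<rho> j > 0 then snd y else \<not> snd y))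
      else None)"

definition endpoints :: "nat \<Rightarrow> (nat \<Rightarrow> real) \<Rightarrow> spoint set" where
  "endpoints n a = {(a 1, True), (a (n + 2), False)} \<union> {(a k, s) | k s. 2 \<le> k \<and> k \<le> n + 1}"

inductive_set orbit_pts ::
  "nat \<Rightarrow> (nat \<Rightarrow> real) \<Rightarrow> nat \<Rightarrow> (nat \<Rightarrow> real) \<Rightarrow> (nat \<Rightarrow> real) \<Rightarrow> spoint set"
  for n a h \<rho> \<sigma> where
  base: "y \<in> endpoints n a \<Longrightarrow> y \<in> orbit_pts n a h \<rho> \<sigma>"
| step: "y \<in> orbit_pts n a h \<rho> \<sigma> \<Longrightarrow> Fside n a h \<rho> \<sigma> y = Some z \<Longrightarrow> z \<in> orbit_pts n a h \<rho> \<sigma>"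

text \<open>The points y^(1), ..., y^(q), ordered along I (0-based list: y^(i) = ypts ! (i-1)).\<close>
definition ypts ::
  "nat \<Rightarrow> (nat \<Rightarrow> real) \<Rightarrow> nat \<Rightarrow> (nat \<Rightarrow> real) \<Rightarrow> (nat \<Rightarrow> real) \<Rightarrow> spoint list" where
  "ypts n a h \<rho> \<sigma> = sorted_list_of_set (orbit_pts n a h \<rho> \<sigma>)"

text \<open>Entries k, k+1 of ys are the two one-sided versions a_m^-, a_m^+ of a
  turning/discontinuity point a_m (2 \<le> m \<le> n+1).\<close>
definition tpair :: "nat \<Rightarrow> (nat \<Rightarrow> real) \<Rightarrow> spoint list \<Rightarrow> nat \<Rightarrow> bool" where
  "tpair n a ys k \<longleftrightarrow> Suc k < length ys \<and>
     (\<exists>m\<in>{2..n+1}. ys ! k = (a m, False) \<and> ys ! Suc k = (a m, True))"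

definition ind :: "bool \<Rightarrow> real" where
  "ind b = (if b then 1 else 0)"

text \<open>Column j: value v at the row of F(y^(j)),
  plus the +-v entries at the turning/discontinuity pairs between y^(j) and F(y^(j));
  contributions at the same entry are added.\<close>
definition Vmat ::
  "real \<Rightarrow> nat \<Rightarrow> (nat \<Rightarrow> real) \<Rightarrow> nat \<Rightarrow> (nat \<Rightarrow> real) \<Rightarrow> (nat \<Rightarrow> real) \<Rightarrow> real mat" where
  "Vmat \<beta> n a h \<rho> \<sigma> =
     (let ys = ypts n a h \<rho> \<sigma>; q = length ys; tp = tpair n a ys in
      mat q q (\<lambda>(i, j).
        case Fside n a h \<rho> \<sigma> (ys ! j) of
          None \<Rightarrow> 0
        | Some z \<Rightarrow>
            (let i0 = (THE i. i < q \<and> ys ! i = z);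
                 r = \<rho> (lap_of n a h (ys ! j));
                 v = sgn (1 / r) * \<bar>1 / r\<bar> powr (- \<beta>)
             in v * (ind (i = i0) +
                  (if j < i0 then
                     ind (j \<le> i \<and> i < i0 \<and> tp i)
                     - ind (0 < i \<and> j \<le> i - 1 \<and> i - 1 < i0 \<and> tp (i - 1))
                   else if i0 < j then
                     ind (0 < i \<and> i0 < i \<and> i \<le> j \<and> tp (i - 1))
                     - ind (i0 < i + 1 \<and> i + 1 \<le> j \<and> tp i)
                   else 0)))))"

definition Umat ::
  "nat \<Rightarrow> (nat \<Rightarrow> real) \<Rightarrow> nat \<Rightarrow> (nat \<Rightarrow> real) \<Rightarrow> (nat \<Rightarrow> real) \<Rightarrow> real mat" where
  "Umat n a h \<rho> \<sigma> =
     (let ys = ypts n a h \<rho> \<sigma> in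
      mat n (length ys) (\<lambda>(r, c). ind (in_lap n a h (Suc r) (ys ! c))))"

end

theory Submission
  imports Defs
begin

lemma a_strict:
  assumes H: "ifs_with_hole n a h \<rho> \<sigma>" and "1 \<le> i" "i < i'" "i' \<le> n + 2"
  shows "a i < a i'"
  using assms(3,4)
proof (induction i')
  case 0 then show ?case by simp
next
  case (Suc m)
  have step: "a m < a (Suc m)" using H Suc.prems assms(2) unfolding ifs_with_hole_def by auto
  show ?case
  proof (cases "i = m")
    case True then show ?thesis using step by simp
  next
    case False then have "a i < a m" using Suc by auto
    then show ?thesis using step by simp
  qed
qed

lemma a_mono:
  assumes H: "ifs_with_hole n a h \<rho> \<sigma>" and "1 \<le> i" "i \<le> i'" "i' \<le> n + 2"
  shows "a i \<le> a i'"
  using a_strict[OF H, of i i'] assms by (cases "i = i'") auto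

lemma in_lap_lex:
  "in_lap n a h j y \<longleftrightarrow> 1 \<le> j \<and> j \<le> n \<and> (a (lapidx h j), True) \<le> y \<and> y \<le> (a (Suc (lapidx h j)), False)"
  by (cases y) (auto simp: in_lap_def)

lemma lapidx_range:
  assumes H: "ifs_with_hole n a h \<rho> \<sigma>" and "1 \<le> j" "j \<le> n"
  shows "1 \<le> lapidx h j" "Suc (lapidx h j) \<le> n + 2"
  using assms unfolding ifs_with_hole_def lapidx_def by auto

lemma lapidx_mono: "j < j' \<Longrightarrow> Suc (lapidx h j) \<le> lapidx h j'"
  unfolding lapidx_def by auto

lemma in_lap_unique:
  assumes H: "ifs_with_hole n a h \<rho> \<sigma>" and "in_lap n a h j y" "in_lap n a h j' y"
  shows "j = j'"
proof (rule ccontr)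
  assume "j \<noteq> j'"
  then consider "j < j'" | "j' < j" by linarith
  then show False
  proof cases
    case 1
    have le: "a (Suc (lapidx h j)) \<le> a (lapidx h j')"
      using a_mono[OF H, of "Suc (lapidx h j)" "lapidx h j'"] lapidx_mono[OF 1, of h]
        lapidx_range[OF H, of j] lapidx_range[OF H, of j'] assms(2,3) by (auto simp: in_lap_lex)
    have "y \<le> (a (Suc (lapidx h j)), False)" "(a (lapidx h j'), True) \<le> y"
      using assms(2,3) by (auto simp: in_lap_lex)
    then have "(a (lapidx h j'), True) \<le> (a (Suc (lapidx h j)), False)" by order
    then show False using le by auto
  next
    case 2
    have le: "a (Suc (lapidx h j')) \<le> a (lapidx h j)"
      using a_mono[OF H, of "Suc (lapidx h j')" "lapidx h j"] lapidx_mono[OF 2, of h]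
        lapidx_range[OF H, of j] lapidx_range[OF H, of j'] assms(2,3) by (auto simp: in_lap_lex)
    have "y \<le> (a (Suc (lapidx h j')), False)" "(a (lapidx h j), True) \<le> y"
      using assms(2,3) by (auto simp: in_lap_lex)
    then have "(a (lapidx h j), True) \<le> (a (Suc (lapidx h j')), False)" by order
    then show False using le by auto
  qed
qed

lemma lap_of_eq:
  assumes H: "ifs_with_hole n a h \<rho> \<sigma>" and "in_lap n a h j y"
  shows "lap_of n a h y = j"
  unfolding lap_of_def using in_lap_unique[OF H] assms(2) by blast


lemma affine_ends:
  fixes \<rho> \<sigma> a1 b1 A B :: real
  assumes "\<rho> \<noteq> 0" "a1 \<le> b1" "(\<lambda>x. \<rho> * x + \<sigma>) ` {a1..b1} = {A..B}"
  shows "\<rho> > 0 \<Longrightarrow> \<rho> * a1 + \<sigma> = A \<and> \<rho> * b1 + \<sigma> = B"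
    and "\<rho> < 0 \<Longrightarrow> \<rho> * a1 + \<sigma> = B \<and> \<rho> * b1 + \<sigma> = A"
proof -
  have m1: "\<rho> * a1 + \<sigma> \<in> {A..B}" "\<rho> * b1 + \<sigma> \<in> {A..B}" using assms(2,3) by (metis atLeastAtMost_iff image_eqI order_refl)+
  have AB: "A \<le> B" using m1 by auto
  obtain s t where s: "s \<in> {a1..b1}" "A = \<rho> * s + \<sigma>" and t: "t \<in> {a1..b1}" "B = \<rho> * t + \<sigma>"
  proof -
    have "A \<in> (\<lambda>x. \<rho> * x + \<sigma>) ` {a1..b1}" "B \<in> (\<lambda>x. \<rho> * x + \<sigma>) ` {a1..b1}" using assms(3) AB by auto
    then show ?thesis using that by blast
  qed
  show "\<rho> > 0 \<Longrightarrow> \<rho> * a1 + \<sigma> = A \<and> \<rho> * b1 + \<sigma> = B"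
  proof -
    assume p: "\<rho> > 0"
    have "\<rho> * a1 \<le> \<rho> * s" "\<rho> * t \<le> \<rho> * b1" using s t p by (auto intro: mult_left_mono)
    then show ?thesis using m1 s t by auto
  qed
  show "\<rho> < 0 \<Longrightarrow> \<rho> * a1 + \<sigma> = B \<and> \<rho> * b1 + \<sigma> = A"
  proof -
    assume p: "\<rho> < 0"
    have "\<rho> * a1 \<ge> \<rho> * t" "\<rho> * s \<ge> \<rho> * b1" using s t p by (auto intro: mult_left_mono_neg)
    then show ?thesis using m1 s t by auto
  qed
qed

lemma Fside_in_lap:
  assumes H: "ifs_with_hole n a h \<rho> \<sigma>" and "in_lap n a h j y"
  shows "Fside n a h \<rho> \<sigma> y = Some ((fst y - \<sigma> j) / \<rho> j, if \<rho> j > 0 then snd y else \<not> snd y)"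
  using assms lap_of_eq[OF H] unfolding Fside_def by (auto simp: Let_def)

lemma Fside_SomeD:
  assumes H: "ifs_with_hole n a h \<rho> \<sigma>" and "Fside n a h \<rho> \<sigma> y = Some z"
  shows "\<exists>j. in_lap n a h j y \<and> z = ((fst y - \<sigma> j) / \<rho> j, if \<rho> j > 0 then snd y else \<not> snd y)"
proof -
  obtain j where j: "in_lap n a h j y" using assms(2) unfolding Fside_def by (auto split: if_splits)
  show ?thesis using j assms(2) Fside_in_lap[OF H j] by auto
qed

lemma orbit_bound:
  assumes H: "ifs_with_hole n a h \<rho> \<sigma>" and "y \<in> orbit_pts n a h \<rho> \<sigma>"
  shows "(a 1, True) \<le> y \<and> y \<le> (a (n + 2), False)"
  using assms(2)
proof induction
  case (base y)
  have n1: "1 \<le> n" using H unfolding ifs_with_hole_def by auto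
  have "\<And>k. 2 \<le> k \<Longrightarrow> k \<le> n + 1 \<Longrightarrow> a 1 < a k \<and> a k < a (n + 2)"
    using a_strict[OF H] by auto
  moreover have "a 1 < a (n + 2)" using a_strict[OF H, of 1 "n+2"] n1 by auto
  ultimately show ?case using base unfolding endpoints_def by auto
next
  case (step y z)
  obtain j where j: "in_lap n a h j y" and z: "z = ((fst y - \<sigma> j) / \<rho> j, if \<rho> j > 0 then snd y else \<not> snd y)"
    using Fside_SomeD[OF H step(2)] by blast
  have jr: "1 \<le> j" "j \<le> n" using j unfolding in_lap_def by auto
  define A where "A = a (lapidx h j)"
  define B where "B = a (Suc (lapidx h j))"
  have n1: "1 \<le> n" using H unfolding ifs_with_hole_def by auto
  have a1n: "a 1 < a (n + 2)" using a_strict[OF H, of 1 "n+2"] n1 by auto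
  have all: "\<forall>i\<in>{1..n}. 0 < \<bar>\<rho> i\<bar> \<and> \<bar>\<rho> i\<bar> < 1 \<and> (\<lambda>x. \<rho> i * x + \<sigma> i) ` Ival n a = lap a h i"
    using H unfolding ifs_with_hole_def by blast
  have r0: "\<rho> j \<noteq> 0" and img0: "(\<lambda>x. \<rho> j * x + \<sigma> j) ` Ival n a = lap a h j"
    using bspec[OF all, of j] jr by auto
  have img: "(\<lambda>x. \<rho> j * x + \<sigma> j) ` {a 1..a (n+2)} = {A..B}"
    using img0 unfolding Ival_def lap_def A_def B_def by simp
  note e1 = affine_ends(1)[OF r0 _ img] and e2 = affine_ends(2)[OF r0 _ img]
  obtain x s where y: "y = (x, s)" by (cases y)
  have yl: "if s then A \<le> x \<and> x < B else A < x \<and> x \<le> B" using j y unfolding in_lap_def A_def B_def by auto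
  show ?case
  proof (cases "\<rho> j > 0")
    case True
    have eq: "a 1 = (A - \<sigma> j) / \<rho> j" "a (n+2) = (B - \<sigma> j) / \<rho> j" using e1 True a1n by (auto simp: field_simps)
    have iff: "(A - \<sigma> j) / \<rho> j \<le> (x - \<sigma> j) / \<rho> j \<longleftrightarrow> A \<le> x"
      "(A - \<sigma> j) / \<rho> j < (x - \<sigma> j) / \<rho> j \<longleftrightarrow> A < x"
      "(x - \<sigma> j) / \<rho> j < (B - \<sigma> j) / \<rho> j \<longleftrightarrow> x < B"
      "(x - \<sigma> j) / \<rho> j \<le> (B - \<sigma> j) / \<rho> j \<longleftrightarrow> x \<le> B"
      using True by (auto simp: divide_le_cancel divide_less_cancel)
    have zz: "z = ((x - \<sigma> j) / \<rho> j, s)" using z y True by simp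
    show ?thesis using yl unfolding zz by (cases s) (simp_all only: eq iff less_eq_prod_simp if_True if_False, auto)
  next
    case False
    then have neg: "\<rho> j < 0" using r0 by auto
    have eq: "a 1 = (B - \<sigma> j) / \<rho> j" "a (n+2) = (A - \<sigma> j) / \<rho> j" using e2 neg a1n by (auto simp: field_simps)
    have iff: "(A - \<sigma> j) / \<rho> j \<ge> (x - \<sigma> j) / \<rho> j \<longleftrightarrow> A \<le> x"
      "(A - \<sigma> j) / \<rho> j > (x - \<sigma> j) / \<rho> j \<longleftrightarrow> A < x"
      "(x - \<sigma> j) / \<rho> j > (B - \<sigma> j) / \<rho> j \<longleftrightarrow> x < B"
      "(x - \<sigma> j) / \<rho> j \<ge> (B - \<sigma> j) / \<rho> j \<longleftrightarrow> x \<le> B"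
      using neg by (auto simp: divide_le_cancel divide_less_cancel)
    have zz: "z = ((x - \<sigma> j) / \<rho> j, \<not> s)" using z y neg by simp
    show ?thesis using yl unfolding zz by (cases s) (simp_all only: eq iff less_eq_prod_simp if_True if_False, auto)
  qed
qed


lemma sorted_idx_less:
  fixes ys :: "'a::linorder list"
  assumes "sorted_wrt (<) ys" "i < length ys" "j < length ys" "ys ! i < ys ! j"
  shows "i < j"
proof (rule ccontr)
  assume "\<not> i < j"
  then have "j \<le> i" by simp
  then have "ys ! j \<le> ys ! i"
    using assms by (cases "j = i") (auto simp: sorted_wrt_iff_nth_less intro: less_imp_le)
  then show False using assms(4) by simp
qed

lemma sorted_idx_le:
  fixes ys :: "'a::linorder list"
  assumes "sorted_wrt (<) ys" "i < length ys" "j < length ys" "ys ! i \<le> ys ! j"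
  shows "i \<le> j"
proof (cases "ys ! i = ys ! j")
  case True
  have "distinct ys" using assms(1) strict_sorted_iff by blast
  then show ?thesis using True assms(2,3) nth_eq_iff_index_eq by blast
next
  case False
  then have "ys ! i < ys ! j" using assms(4) by (simp add: order.order_iff_strict)
  then show ?thesis using sorted_idx_less[OF assms(1,2,3)] by simp
qed

lemma between_F_T: "(x, False) < (p :: spoint) \<Longrightarrow> p \<le> (x, True) \<Longrightarrow> p = (x, True)"
  by (cases p) auto

lemma between_F_T': "(x, False) \<le> (p :: spoint) \<Longrightarrow> p < (x, True) \<Longrightarrow> p = (x, False)"
  by (cases p) auto

lemma key_nontp:
  assumes H: "ifs_with_hole n a h \<rho> \<sigma>"
    and S: "sorted_wrt (<) ys"
    and E: "endpoints n a \<subseteq> set ys"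
    and Bd: "\<And>y. y \<in> set ys \<Longrightarrow> (a 1, True) \<le> y \<and> y \<le> (a (n + 2), False)"
    and k: "Suc k < length ys" and ntp: "\<not> tpair n a ys k"
  shows "in_lap n a h r (ys ! k) \<longleftrightarrow> in_lap n a h r (ys ! Suc k)"
proof (cases "1 \<le> r \<and> r \<le> n")
  case False then show ?thesis by (auto simp: in_lap_def)
next
  case True
  define l where "l = lapidx h r"
  have l1: "1 \<le> l" "Suc l \<le> n + 2" using lapidx_range[OF H, of r] True l_def by auto
  define A where "A = a l"
  define B where "B = a (Suc l)"
  have lapc: "\<And>p. in_lap n a h r p \<longleftrightarrow> (A, True) \<le> p \<and> p \<le> (B, False)"
    using True by (simp add: in_lap_lex A_def B_def l_def)
  have lt: "ys ! k < ys ! Suc k" using S k by (simp add: sorted_wrt_iff_nth_less)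
  have mem: "\<And>p. p \<in> endpoints n a \<Longrightarrow> \<exists>m<length ys. ys ! m = p"
    using E by (metis in_set_conv_nth subsetD)
  have kl: "k < length ys" using k by simp
  show ?thesis
  proof
    assume in1: "in_lap n a h r (ys ! k)"
    show "in_lap n a h r (ys ! Suc k)"
    proof (rule ccontr)
      assume nin: "\<not> in_lap n a h r (ys ! Suc k)"
      have "(A, True) \<le> ys ! Suc k" using in1 lt lapc by auto
      then have gt: "(B, False) < ys ! Suc k" using nin lapc by auto
      have "(B, False) \<in> endpoints n a" using l1 unfolding endpoints_def B_def
        by (cases "Suc l = n + 2") auto
      then obtain m where m: "m < length ys" "ys ! m = (B, False)" using mem by blast
      have "k \<le> m" using sorted_idx_le[OF S kl m(1)] in1 lapc m(2) by auto
      moreover have "m < Suc k" using sorted_idx_less[OF S m(1) k] gt m(2) by auto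
      ultimately have "m = k" by simp
      then have p1: "ys ! k = (B, False)" using m by simp
      show False
      proof (cases "Suc l = n + 2")
        case True
        then show False using Bd[of "ys ! Suc k"] k gt unfolding B_def by auto
      next
        case False
        have "(B, True) \<in> endpoints n a" using l1 False unfolding endpoints_def B_def by auto
        then obtain m' where m': "m' < length ys" "ys ! m' = (B, True)" using mem by blast
        have "k < m'" using sorted_idx_less[OF S kl m'(1)] p1 m'(2) by auto
        then have "Suc k \<le> m'" by simp
        then have "ys ! Suc k \<le> ys ! m'" using S m'(1)
          by (cases "Suc k = m'") (auto simp: sorted_wrt_iff_nth_less intro: less_imp_le)
        then have p2: "ys ! Suc k = (B, True)" using between_F_T[OF gt] m'(2) by auto
        have "tpair n a ys k" unfolding tpair_def using k p1 p2 l1 False B_def by auto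
        then show False using ntp by simp
      qed
    qed
  next
    assume in2: "in_lap n a h r (ys ! Suc k)"
    show "in_lap n a h r (ys ! k)"
    proof (rule ccontr)
      assume nin: "\<not> in_lap n a h r (ys ! k)"
      have "ys ! k \<le> (B, False)" using in2 lt lapc by auto
      then have gt: "ys ! k < (A, True)" using nin lapc by auto
      have "(A, True) \<in> endpoints n a" using l1 unfolding endpoints_def A_def
        by (cases "l = 1") auto
      then obtain m where m: "m < length ys" "ys ! m = (A, True)" using mem by blast
      have "m \<le> Suc k" using sorted_idx_le[OF S m(1) k] in2 lapc m(2) by auto
      moreover have "k < m" using sorted_idx_less[OF S kl m(1)] gt m(2) by auto
      ultimately have p2: "ys ! Suc k = (A, True)" using m by (metis le_antisym Suc_leI)
      show False
      proof (cases "l = 1")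
        case True
        then show False using Bd[of "ys ! k"] kl gt unfolding A_def by auto
      next
        case False
        have "(A, False) \<in> endpoints n a" using l1 False unfolding endpoints_def A_def by auto
        then obtain m' where m': "m' < length ys" "ys ! m' = (A, False)" using mem by blast
        have "m' < Suc k" using sorted_idx_less[OF S m'(1) k] p2 m'(2) by auto
        then have "m' \<le> k" by simp
        then have "ys ! m' \<le> ys ! k" using S kl
          by (cases "k = m'") (auto simp: sorted_wrt_iff_nth_less intro: less_imp_le)
        then have p1: "ys ! k = (A, False)" using between_F_T'[OF _ gt] m'(2) by auto
        have "tpair n a ys k" unfolding tpair_def using k p1 p2 l1 False A_def by auto
        then show False using ntp by simp
      qed
    qed
  qed
qed


lemma telescope_tp:
  fixes g :: "nat \<Rightarrow> real"
  assumes hyp: "\<And>k. Suc k < q \<Longrightarrow> \<not> tp k \<Longrightarrow> g k = g (Suc k)"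
    and "p \<le> r" "r < q"
  shows "(\<Sum>k\<in>{p..<r}. ind (tp k) * (g k - g (Suc k))) = g p - g r"
  using assms(2,3)
proof (induction r)
  case 0 then show ?case by simp
next
  case (Suc r)
  show ?case
  proof (cases "p = Suc r")
    case True then show ?thesis by simp
  next
    case False
    then have pr: "p \<le> r" using Suc.prems by simp
    have IH: "(\<Sum>k\<in>{p..<r}. ind (tp k) * (g k - g (Suc k))) = g p - g r" using Suc.IH pr Suc.prems by simp
    have t: "ind (tp r) * (g r - g (Suc r)) = g r - g (Suc r)"
      using hyp[of r] Suc.prems by (cases "tp r") (auto simp: ind_def)
    have "(\<Sum>k\<in>{p..<Suc r}. ind (tp k) * (g k - g (Suc k)))
        = (\<Sum>k\<in>{p..<r}. ind (tp k) * (g k - g (Suc k))) + ind (tp r) * (g r - g (Suc r))"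
      using pr by simp
    also have "\<dots> = (g p - g r) + (g r - g (Suc r))" by (simp only: IH t)
    finally show ?thesis by simp
  qed
qed

lemma sum_ind_restrict:
  fixes f :: "nat \<Rightarrow> real"
  assumes "S \<subseteq> {..<q}"
  shows "(\<Sum>c<q. f c * ind (c \<in> S \<and> Q c)) = (\<Sum>c\<in>S. f c * ind (Q c))"
proof -
  have fS: "finite S" using assms finite_subset by blast
  have "(\<Sum>c<q. f c * ind (c \<in> S \<and> Q c)) = (\<Sum>c\<in>S. f c * ind (c \<in> S \<and> Q c))"
    by (rule sum.mono_neutral_right) (use assms in \<open>auto simp: ind_def\<close>)
  also have "\<dots> = (\<Sum>c\<in>S. f c * ind (Q c))" by (rule sum.cong) auto
  finally show ?thesis .
qed

lemma colsum_lt: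
  fixes g :: "nat \<Rightarrow> real"
  assumes "i < i0" "i0 < q"
  shows "(\<Sum>c<q. g c * (ind (i \<le> c \<and> c < i0 \<and> tp c)
            - ind (0 < c \<and> i \<le> c - 1 \<and> c - 1 < i0 \<and> tp (c - 1))))
       = (\<Sum>k\<in>{i..<i0}. ind (tp k) * (g k - g (Suc k)))"
proof -
  have e1: "(\<Sum>c<q. g c * ind (i \<le> c \<and> c < i0 \<and> tp c)) = (\<Sum>c\<in>{i..<i0}. g c * ind (tp c))"
    using sum_ind_restrict[of "{i..<i0}" q g tp] assms by (simp add: subset_eq)
  have "(\<Sum>c<q. g c * ind (0 < c \<and> i \<le> c - 1 \<and> c - 1 < i0 \<and> tp (c - 1)))
      = (\<Sum>c<q. g c * ind (c \<in> {Suc i..<Suc i0} \<and> tp (c - 1)))"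
    by (rule sum.cong) (auto intro!: arg_cong[where f = ind])
  also have "\<dots> = (\<Sum>c\<in>{Suc i..<Suc i0}. g c * ind (tp (c - 1)))"
    by (rule sum_ind_restrict) (use assms in auto)
  also have "\<dots> = (\<Sum>k\<in>{i..<i0}. g (Suc k) * ind (tp k))"
    unfolding sum.shift_bounds_Suc_ivl by simp
  finally have e2: "(\<Sum>c<q. g c * ind (0 < c \<and> i \<le> c - 1 \<and> c - 1 < i0 \<and> tp (c - 1)))
      = (\<Sum>k\<in>{i..<i0}. g (Suc k) * ind (tp k))" .
  show ?thesis
    unfolding right_diff_distrib sum_subtractf e1 e2 by (simp add: sum_subtractf algebra_simps)
qed

lemma colsum_gt:
  fixes g :: "nat \<Rightarrow> real"
  assumes "i0 < i" "i < q"
  shows "(\<Sum>c<q. g c * (ind (0 < c \<and> i0 < c \<and> c \<le> i \<and> tp (c - 1))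
            - ind (i0 < c + 1 \<and> c + 1 \<le> i \<and> tp c)))
       = - (\<Sum>k\<in>{i0..<i}. ind (tp k) * (g k - g (Suc k)))"
proof -
  have e1: "(\<Sum>c<q. g c * ind (i0 < c + 1 \<and> c + 1 \<le> i \<and> tp c))
       = (\<Sum>c<q. g c * ind (c \<in> {i0..<i} \<and> tp c))"
    by (rule sum.cong) (auto intro!: arg_cong[where f = ind])
  also have "\<dots> = (\<Sum>c\<in>{i0..<i}. g c * ind (tp c))"
    using sum_ind_restrict[of "{i0..<i}" q g tp] assms by (simp add: subset_eq)
  finally have e1: "(\<Sum>c<q. g c * ind (i0 < c + 1 \<and> c + 1 \<le> i \<and> tp c)) = (\<Sum>c\<in>{i0..<i}. g c * ind (tp c))" .
  have "(\<Sum>c<q. g c * ind (0 < c \<and> i0 < c \<and> c \<le> i \<and> tp (c - 1)))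
      = (\<Sum>c<q. g c * ind (c \<in> {Suc i0..<Suc i} \<and> tp (c - 1)))"
    by (rule sum.cong) (auto intro!: arg_cong[where f = ind])
  also have "\<dots> = (\<Sum>c\<in>{Suc i0..<Suc i}. g c * ind (tp (c - 1)))"
    by (rule sum_ind_restrict) (use assms in auto)
  also have "\<dots> = (\<Sum>k\<in>{i0..<i}. g (Suc k) * ind (tp k))"
    unfolding sum.shift_bounds_Suc_ivl by simp
  finally have e2: "(\<Sum>c<q. g c * ind (0 < c \<and> i0 < c \<and> c \<le> i \<and> tp (c - 1)))
      = (\<Sum>k\<in>{i0..<i}. g (Suc k) * ind (tp k))" .
  show ?thesis
    unfolding right_diff_distrib sum_subtractf e1 e2 by (simp add: sum_subtractf algebra_simps sum_negf)
qed


lemma col_main: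
  assumes H: "ifs_with_hole n a h \<rho> \<sigma>" and fin: "finite (orbit_pts n a h \<rho> \<sigma>)"
    and i: "i < length (ypts n a h \<rho> \<sigma>)" and ij: "in_lap n a h j (ypts n a h \<rho> \<sigma> ! i)"
    and r: "r < n"
  shows "(Umat n a h \<rho> \<sigma> * Vmat \<beta> n a h \<rho> \<sigma> *\<^sub>v unit_vec (length (ypts n a h \<rho> \<sigma>)) i) $ r
       = (sgn (1 / \<rho> j) * \<bar>1 / \<rho> j\<bar> powr (- \<beta>)) * ind (in_lap n a h (Suc r) (ypts n a h \<rho> \<sigma> ! i))"
proof -
  define ys where "ys = ypts n a h \<rho> \<sigma>"
  define q where "q = length ys"
  define tp where "tp = tpair n a ys"
  define g where "g = (\<lambda>c. ind (in_lap n a h (Suc r) (ys ! c)))"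
  define v where "v = sgn (1 / \<rho> j) * \<bar>1 / \<rho> j\<bar> powr (- \<beta>)"
  have setys: "set ys = orbit_pts n a h \<rho> \<sigma>" using fin unfolding ys_def ypts_def by simp
  have S: "sorted_wrt (<) ys" unfolding ys_def ypts_def by (rule strict_sorted_list_of_set)
  have dist: "distinct ys" using S strict_sorted_iff by blast
  have E: "endpoints n a \<subseteq> set ys" using setys orbit_pts.base by blast
  have Bd: "\<And>y. y \<in> set ys \<Longrightarrow> (a 1, True) \<le> y \<and> y \<le> (a (n + 2), False)"
    using orbit_bound[OF H] setys by blast
  have iq: "i < q" using i unfolding q_def ys_def by simp
  have ij': "in_lap n a h j (ys ! i)" using ij unfolding ys_def by simp
  define z where "z = ((fst (ys ! i) - \<sigma> j) / \<rho> j, if \<rho> j > 0 then snd (ys ! i) else \<not> snd (ys ! i))"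
  have Fz: "Fside n a h \<rho> \<sigma> (ys ! i) = Some z" using Fside_in_lap[OF H ij'] z_def by simp
  have "ys ! i \<in> orbit_pts n a h \<rho> \<sigma>" using iq setys q_def nth_mem by blast
  then have "z \<in> orbit_pts n a h \<rho> \<sigma>" using Fz orbit_pts.step by blast
  then obtain i0 where i0: "i0 < q" "ys ! i0 = z" using setys q_def by (metis in_set_conv_nth)
  have the_i0: "(THE i. i < q \<and> ys ! i = z) = i0"
    using i0 dist nth_eq_iff_index_eq q_def by blast
  have lapj: "lap_of n a h (ys ! i) = j" using lap_of_eq[OF H ij'] .
  define D where "D = (\<lambda>c. if i < i0 then
                     ind (i \<le> c \<and> c < i0 \<and> tp c)
                     - ind (0 < c \<and> i \<le> c - 1 \<and> c - 1 < i0 \<and> tp (c - 1))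
                   else if i0 < i then
                     ind (0 < c \<and> i0 < c \<and> c \<le> i \<and> tp (c - 1))
                     - ind (i0 < c + 1 \<and> c + 1 \<le> i \<and> tp c)
                   else 0)"
  have Vc: "Vmat \<beta> n a h \<rho> \<sigma> $$ (c, i) = v * (ind (c = i0) + D c)" if "c < q" for c
    using that iq unfolding Vmat_def Let_def ys_def[symmetric] q_def[symmetric] tp_def[symmetric]
    by (simp add: Fz the_i0 lapj v_def D_def)
  have Uc: "Umat n a h \<rho> \<sigma> $$ (r, c) = g c" if "c < q" for c
    using that r unfolding Umat_def Let_def ys_def[symmetric] q_def[symmetric] g_def by simp
  have dims: "dim_row (Umat n a h \<rho> \<sigma>) = n" "dim_col (Umat n a h \<rho> \<sigma>) = q"
    "dim_row (Vmat \<beta> n a h \<rho> \<sigma>) = q" "dim_col (Vmat \<beta> n a h \<rho> \<sigma>) = q"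
    unfolding Umat_def Vmat_def Let_def ys_def[symmetric] q_def[symmetric] by simp_all
  have "(Umat n a h \<rho> \<sigma> * Vmat \<beta> n a h \<rho> \<sigma> *\<^sub>v unit_vec q i) $ r
      = (\<Sum>c\<in>{0..<q}. Umat n a h \<rho> \<sigma> $$ (r, c) * Vmat \<beta> n a h \<rho> \<sigma> $$ (c, i))"
  proof -
    have "(Umat n a h \<rho> \<sigma> * Vmat \<beta> n a h \<rho> \<sigma> *\<^sub>v unit_vec q i) $ r
        = row (Umat n a h \<rho> \<sigma>) r \<bullet> col (Vmat \<beta> n a h \<rho> \<sigma>) i"
      using dims iq r by simp
    then show ?thesis using dims iq r by (simp add: scalar_prod_def)
  qed
  also have "\<dots> = (\<Sum>c<q. g c * (v * (ind (c = i0) + D c)))"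
    by (rule sum.cong) (auto simp: Uc Vc)
  also have "\<dots> = v * (g i0 + (\<Sum>c<q. g c * D c))"
  proof -
    have "(\<Sum>c<q. g c * (v * (ind (c = i0) + D c))) = v * ((\<Sum>c<q. g c * ind (c = i0)) + (\<Sum>c<q. g c * D c))"
      by (simp add: algebra_simps sum.distrib sum_distrib_left)
    moreover have "(\<Sum>c<q. g c * ind (c = i0)) = g i0"
      using i0(1) by (simp add: ind_def if_distrib[of "\<lambda>x. g _ * x"] sum.delta' cong: if_cong)
    ultimately show ?thesis by simp
  qed
  also have "\<dots> = v * g i"
  proof -
    have hyp: "g k = g (Suc k)" if "Suc k < q" "\<not> tp k" for k
      using key_nontp[OF H S E Bd, of k "Suc r"] that unfolding g_def tp_def q_def by simp
    consider "i < i0" | "i0 < i" | "i = i0" by linarith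
    then show ?thesis
    proof cases
      case 1
      have "(\<Sum>c<q. g c * D c) = (\<Sum>k\<in>{i..<i0}. ind (tp k) * (g k - g (Suc k)))"
        unfolding D_def using 1 colsum_lt[OF 1 i0(1), of g tp] by simp
      also have "\<dots> = g i - g i0" using telescope_tp[where q=q and g=g and tp=tp and p=i and r=i0] hyp 1 i0 by simp
      finally show ?thesis by simp
    next
      case 2
      have "(\<Sum>c<q. g c * D c) = - (\<Sum>k\<in>{i0..<i}. ind (tp k) * (g k - g (Suc k)))"
        unfolding D_def using 2 colsum_gt[OF 2 iq, of g tp] by simp
      also have "\<dots> = g i - g i0" using telescope_tp[where q=q and g=g and tp=tp and p=i0 and r=i] hyp 2 iq by simp
      finally show ?thesis by simp
    next
      case 3
      then show ?thesis by (simp add: D_def)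
    qed
  qed
  finally show ?thesis unfolding v_def g_def q_def ys_def .
qed


theorem lemma2:
  fixes n h j i1 i2 :: nat and a \<rho> \<sigma> :: "nat \<Rightarrow> real" and \<beta> :: real
  assumes "ifs_with_hole n a h \<rho> \<sigma>"
    and "finite (orbit_pts n a h \<rho> \<sigma>)"
    and "i1 < length (ypts n a h \<rho> \<sigma>)" and "i2 < length (ypts n a h \<rho> \<sigma>)"
    and "in_lap n a h j (ypts n a h \<rho> \<sigma> ! i1)"
    and "in_lap n a h j (ypts n a h \<rho> \<sigma> ! i2)"
  shows "Umat n a h \<rho> \<sigma> * Vmat \<beta> n a h \<rho> \<sigma> *\<^sub>v unit_vec (length (ypts n a h \<rho> \<sigma>)) i1
       = Umat n a h \<rho> \<sigma> * Vmat \<beta> n a h \<rho> \<sigma> *\<^sub>v unit_vec (length (ypts n a h \<rho> \<sigma>)) i2"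
proof (rule eq_vecI)
  have dr: "dim_row (Umat n a h \<rho> \<sigma>) = n" unfolding Umat_def Let_def by simp
  show "dim_vec (Umat n a h \<rho> \<sigma> * Vmat \<beta> n a h \<rho> \<sigma> *\<^sub>v unit_vec (length (ypts n a h \<rho> \<sigma>)) i1)
      = dim_vec (Umat n a h \<rho> \<sigma> * Vmat \<beta> n a h \<rho> \<sigma> *\<^sub>v unit_vec (length (ypts n a h \<rho> \<sigma>)) i2)"
    by simp
  fix r assume "r < dim_vec (Umat n a h \<rho> \<sigma> * Vmat \<beta> n a h \<rho> \<sigma> *\<^sub>v unit_vec (length (ypts n a h \<rho> \<sigma>)) i2)"
  then have r: "r < n" using dr by simp
  have e1: "in_lap n a h (Suc r) (ypts n a h \<rho> \<sigma> ! i1) \<longleftrightarrow> Suc r = j"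
    using in_lap_unique[OF assms(1) _ assms(5)] assms(5) by blast
  have e2: "in_lap n a h (Suc r) (ypts n a h \<rho> \<sigma> ! i2) \<longleftrightarrow> Suc r = j"
    using in_lap_unique[OF assms(1) _ assms(6)] assms(6) by blast
  show "(Umat n a h \<rho> \<sigma> * Vmat \<beta> n a h \<rho> \<sigma> *\<^sub>v unit_vec (length (ypts n a h \<rho> \<sigma>)) i1) $ r
      = (Umat n a h \<rho> \<sigma> * Vmat \<beta> n a h \<rho> \<sigma> *\<^sub>v unit_vec (length (ypts n a h \<rho> \<sigma>)) i2) $ r"
    using col_main[OF assms(1,2,3,5) r, of \<beta>] col_main[OF assms(1,2,4,6) r, of \<beta>] e1 e2 by simp
qed

end
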